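(* For every $\lambda>2$ there exist: the spaces $X_1=X_2=X_3=\{0,1\}$, the uniform probability measures $\nu_i$ on $X_i$, constants $0<m<M$ with $M/m=\lambda$, and a consistent family of probability measures $\mu_{12},\mu_{13},\mu_{23}$ on $X_i\times X_j$ with densities $\rho_{ij}=d\mu_{ij}/d(\nu_i\otimes\nu_j)$ satisfying $m\le\rho_{ij}\le M$, such that $\Pi(\mu_{12},\mu_{13},\mu_{23})$ is empty. (Hence the constant $\lambda_{32}$ in the density condition for $n=3$, $k=2$ cannot exceed $2$.)
   Context: A family $\mu_{12},\mu_{13},\mu_{23}$ of probability measures on $X_1\times X_2$, $X_1\times X_3$, $X_2\times X_3$ is consistent if any two of them have the same one-dimensional marginal on their common coordinate. $\Pi(\mu_{12},\mu_{13},\mu_{23})$ is the set of probability measures $\mu$ on $X_1\times X_2\times X_3$ whose projection onto $X_i\times X_j$ equals $\mu_{ij}$ for all $1\le i<j\le3$. The density condition: for given $\lambda$, whenever a consistent family has densities w.r.t. $\nu_i\otimes\nu_j$ bounded between $m$ and $M$ with $M/m\le\lambda$, a uniting measure exists. *)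

theory Defs
  imports "HOL-Probability.Probability"
begin

text \<open>The spaces X1 = X2 = X3 = {0,1} are modelled by the type bool.
Probability measures on finite spaces are modelled as pmfs.\<close>

definition unif :: "bool pmf" where
  "unif = pmf_of_set (UNIV :: bool set)"

text \<open>Density of a measure on X_i x X_j w.r.t. the product of the reference measures
(pointwise ratio, which is the Radon-Nikodym derivative on a finite space whose reference
measure charges every point).\<close>
definition dens2 :: "'a pmf \<Rightarrow> 'b pmf \<Rightarrow> ('a \<times> 'b) pmf \<Rightarrow> 'a \<times> 'b \<Rightarrow> real" where
  "dens2 \<nu>1 \<nu>2 \<mu> = (\<lambda>(a,b). pmf \<mu> (a,b) / (pmf \<nu>1 a * pmf \<nu>2 b))"

definition consistent3 ::
  "('a \<times> 'b) pmf \<Rightarrow> ('a \<times> 'c) pmf \<Rightarrow> ('b \<times> 'c) pmf \<Rightarrow> bool" where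
  "consistent3 \<mu>12 \<mu>13 \<mu>23 \<longleftrightarrow>
     map_pmf fst \<mu>12 = map_pmf fst \<mu>13 \<and>
     map_pmf snd \<mu>12 = map_pmf fst \<mu>23 \<and>
     map_pmf snd \<mu>13 = map_pmf snd \<mu>23"

definition Pi3 ::
  "('a \<times> 'b) pmf \<Rightarrow> ('a \<times> 'c) pmf \<Rightarrow> ('b \<times> 'c) pmf \<Rightarrow> ('a \<times> 'b \<times> 'c) pmf set" where
  "Pi3 \<mu>12 \<mu>13 \<mu>23 = {\<mu>.
     map_pmf (\<lambda>(x,y,z). (x,y)) \<mu> = \<mu>12 \<and>
     map_pmf (\<lambda>(x,y,z). (x,z)) \<mu> = \<mu>13 \<and>
     map_pmf (\<lambda>(x,y,z). (y,z)) \<mu> = \<mu>23}"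

end

theory Submission
  imports Defs
begin

lemma pmf_map_fin:
  fixes f :: "'a::finite \<Rightarrow> 'b"
  shows "pmf (map_pmf f p) y = sum (pmf p) {x. f x = y}"
  by (simp add: pmf_map measure_measure_pmf_finite vimage_def)

lemma two_div: "2 * (y / (2 * c)) = (y::real) / c"
  by (cases "c=0") (simp_all add: field_simps)

lemma pmf_unif: "pmf unif a = 1/2"
  by (simp add: unif_def pmf_of_set)

definition fq :: "real \<Rightarrow> bool \<times> bool \<Rightarrow> real" where
  "fq lam = (\<lambda>(a,b). if a = b then 1 / (2*(1+lam)) else lam / (2*(1+lam)))"

lemma UNIV_bb: "(UNIV :: (bool \<times> bool) set) = {(True,True),(True,False),(False,True),(False,False)}"
  by (auto simp: UNIV_bool)

lemma UNIV_bbb: "(UNIV :: (bool \<times> bool \<times> bool) set) =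
  {(True,True,True),(True,True,False),(True,False,True),(True,False,False),
   (False,True,True),(False,True,False),(False,False,True),(False,False,False)}"
  by (auto simp: UNIV_bool)

lemma fq_pmf:
  assumes "lam > 2"
  shows "pmf (embed_pmf (fq lam)) x = fq lam x"
proof -
  have nn: "\<And>x. 0 \<le> fq lam x" using assms by (auto simp: fq_def)
  have "(\<integral>\<^sup>+ x. ennreal (fq lam x) \<partial>count_space UNIV) = (\<Sum>x\<in>UNIV. ennreal (fq lam x))"
    by (rule nn_integral_count_space_finite) simp
  also have "\<dots> = ennreal (\<Sum>x\<in>UNIV. fq lam x)"
    using nn by (simp add: sum_ennreal)
  also have "(\<Sum>x\<in>UNIV. fq lam x) = 1"
  proof -
    have "(\<Sum>x\<in>UNIV. fq lam x) = 2 * (1 / (2*(1+lam))) + 2 * (lam / (2*(1+lam)))"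
      by (simp add: UNIV_bb fq_def)
    also have "\<dots> = 1"
    proof -
      have p: "1+lam \<noteq> 0" using assms by simp
      have "2 * (1 / (2*(1+lam))) + 2 * (lam / (2*(1+lam))) = 1/(1+lam) + lam/(1+lam)" by (simp only: two_div)
      also have "\<dots> = (1+lam)/(1+lam)" by (rule add_divide_distrib[symmetric])
      finally show ?thesis using p by simp
    qed
    finally show ?thesis .
  qed
  finally show ?thesis using pmf_embed_pmf[OF nn] by simp
qed

theorem mainTheorem3:
  fixes lam :: real
  assumes "lam > 2"
  shows "\<exists>(m::real) (M::real) (\<mu>12 :: (bool \<times> bool) pmf) (\<mu>13 :: (bool \<times> bool) pmf)
            (\<mu>23 :: (bool \<times> bool) pmf).
           0 < m \<and> m < M \<and> M / m = lam \<and>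
           consistent3 \<mu>12 \<mu>13 \<mu>23 \<and>
           (\<forall>p. m \<le> dens2 unif unif \<mu>12 p \<and> dens2 unif unif \<mu>12 p \<le> M) \<and>
           (\<forall>p. m \<le> dens2 unif unif \<mu>13 p \<and> dens2 unif unif \<mu>13 p \<le> M) \<and>
           (\<forall>p. m \<le> dens2 unif unif \<mu>23 p \<and> dens2 unif unif \<mu>23 p \<le> M) \<and>
           Pi3 \<mu>12 \<mu>13 \<mu>23 = {}"
proof -
  define \<mu> where "\<mu> = embed_pmf (fq lam)"
  have pm: "\<And>x. pmf \<mu> x = fq lam x" using fq_pmf[OF assms] by (simp add: \<mu>_def)
  define m where "m = 2 / (1+lam)"
  define M where "M = 2 * lam / (1+lam)"
  have sw: "map_pmf prod.swap \<mu> = \<mu>"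
  proof (rule pmf_eqI)
    fix x :: "bool \<times> bool"
    have "pmf (map_pmf prod.swap \<mu>) (prod.swap (prod.swap x)) = pmf \<mu> (prod.swap x)"
      by (rule pmf_map_inj') simp
    hence "pmf (map_pmf prod.swap \<mu>) x = pmf \<mu> (prod.swap x)" by simp
    then show "pmf (map_pmf prod.swap \<mu>) x = pmf \<mu> x"
      by (cases x) (simp add: pm fq_def eq_commute)
  qed
  have cons: "consistent3 \<mu> \<mu> \<mu>"
  proof -
    have "map_pmf snd \<mu> = map_pmf fst (map_pmf prod.swap \<mu>)"
      by (simp add: pmf.map_comp o_def)
    then show ?thesis using sw by (simp add: consistent3_def)
  qed
  have dens: "\<forall>p. m \<le> dens2 unif unif \<mu> p \<and> dens2 unif unif \<mu> p \<le> M"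
  proof
    fix p :: "bool \<times> bool"
    show "m \<le> dens2 unif unif \<mu> p \<and> dens2 unif unif \<mu> p \<le> M"
    proof -
      have "dens2 unif unif \<mu> p = 4 * fq lam p"
        by (cases p) (simp add: dens2_def pmf_unif pm)
      moreover have "fq lam p = 1 / (2*(1+lam)) \<or> fq lam p = lam / (2*(1+lam))"
        by (cases p) (simp add: fq_def)
      moreover have "1 / (2*(1+lam)) \<le> lam / (2*(1+lam))"
        using assms by (simp add: divide_right_mono)
      moreover have "4 * (1 / (2*(1+lam))) = m" "4 * (lam / (2*(1+lam))) = M"
        using assms by (simp_all add: m_def M_def divide_simps)
      moreover have "m \<le> M" using assms by (simp add: m_def M_def divide_right_mono)
      ultimately show ?thesis by auto
    qed
  qed
  have empty: "Pi3 \<mu> \<mu> \<mu> = {}"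
  proof (rule ccontr)
    assume "Pi3 \<mu> \<mu> \<mu> \<noteq> {}"
    then obtain \<nu> where h: "map_pmf (\<lambda>(x,y,z). (x,y)) \<nu> = \<mu>"
      "map_pmf (\<lambda>(x,y,z). (x,z)) \<nu> = \<mu>" "map_pmf (\<lambda>(x,y,z). (y,z)) \<nu> = \<mu>"
      unfolding Pi3_def by blast
    define w where "w = (\<lambda>x y z. pmf \<nu> (x,y,z))"
    have e12: "\<And>a b. pmf \<mu> (a,b) = w a b True + w a b False"
    proof -
      fix a b :: bool
      have "{x. (case x of (x,y,z) \<Rightarrow> (x,y)) = (a,b)} = {(a,b,True),(a,b,False)}"
        by (auto simp: UNIV_bool)
      note S = this
      have "pmf (map_pmf (\<lambda>(x,y,z). (x,y)) \<nu>) (a,b) = sum (pmf \<nu>) {x. (case x of (x,y,z) \<Rightarrow> (x,y)) = (a,b)}"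
        by (rule pmf_map_fin)
      then have "pmf \<mu> (a,b) = sum (pmf \<nu>) {(a,b,True),(a,b,False)}" unfolding S h(1) .
      then show "pmf \<mu> (a,b) = w a b True + w a b False" by (simp add: w_def)
    qed
    have e13: "\<And>a b. pmf \<mu> (a,b) = w a True b + w a False b"
    proof -
      fix a b :: bool
      have "{x. (case x of (x,y,z) \<Rightarrow> (x,z)) = (a,b)} = {(a,True,b),(a,False,b)}"
        by (auto simp: UNIV_bool)
      note S = this
      have "pmf (map_pmf (\<lambda>(x,y,z). (x,z)) \<nu>) (a,b) = sum (pmf \<nu>) {x. (case x of (x,y,z) \<Rightarrow> (x,z)) = (a,b)}"
        by (rule pmf_map_fin)
      then have "pmf \<mu> (a,b) = sum (pmf \<nu>) {(a,True,b),(a,False,b)}" unfolding S h(2) .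
      then show "pmf \<mu> (a,b) = w a True b + w a False b" by (simp add: w_def)
    qed
    have e23: "\<And>a b. pmf \<mu> (a,b) = w True a b + w False a b"
    proof -
      fix a b :: bool
      have "{x. (case x of (x,y,z) \<Rightarrow> (y,z)) = (a,b)} = {(True,a,b),(False,a,b)}"
        by (auto simp: UNIV_bool)
      note S = this
      have "pmf (map_pmf (\<lambda>(x,y,z). (y,z)) \<nu>) (a,b) = sum (pmf \<nu>) {x. (case x of (x,y,z) \<Rightarrow> (y,z)) = (a,b)}"
        by (rule pmf_map_fin)
      then have "pmf \<mu> (a,b) = sum (pmf \<nu>) {(True,a,b),(False,a,b)}" unfolding S h(3) .
      then show "pmf \<mu> (a,b) = w True a b + w False a b" by (simp add: w_def)
    qed
    have tot: "sum (pmf \<nu>) UNIV = 1" by (rule sum_pmf_eq_1) auto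
    hence tot': "w True True True + w True True False + w True False True + w True False False +
      w False True True + w False True False + w False False True + w False False False = 1"
      by (simp add: UNIV_bbb w_def add.assoc)
    have nn: "\<And>x y z. w x y z \<ge> 0" by (simp add: w_def)
    have d: "pmf \<mu> (True,False) = lam / (2*(1+lam))" "pmf \<mu> (False,True) = lam / (2*(1+lam))"
      by (auto simp: pm fq_def)
    have q3: "3 * (lam / (2*(1+lam))) \<le> 1"
      using e12[of True False] e12[of False True] e13[of True False] e13[of False True]
        e23[of True False] e23[of False True] d tot'
        nn[of True True True] nn[of False False False]
      by linarith
    have dpos: "0 < 2*(1+lam)" using assms by simp
    have "3 * lam \<le> 2*(1+lam)" using q3 dpos by (simp add: divide_le_eq_1_pos)
    then show False using assms by simp
  qed
  have "0 < m" "M / m = lam" using assms by (auto simp: m_def M_def field_simps)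
  moreover have "m < M" using assms unfolding m_def M_def
    by (intro divide_strict_right_mono) auto
  ultimately
  show ?thesis using cons dens empty by blast
qed

end
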